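(* Let $F$ be a field of characteristic zero and let $Q$ be a finite quiver with vertex set $Q_0=\{1,\dots,n\}$ such that the path algebra $FQ$ is a PI algebra. Let \[A_Q=\{A\in M_n(F)\mid A_{i,j}=0 \text{ whenever there is no path in } Q \text{ from } i \text{ to } j\}.\] Then $\mathrm{Id}(FQ)=\mathrm{Id}(A_Q)$.
   Context: Paths in $Q$ include the length-zero paths $e_i$ at each vertex $i$ (so there is always a path from $i$ to $i$). The path algebra $FQ$ is the $F$-vector space with basis all paths of $Q$, with product of paths $p,q$ equal to the concatenation $pq$ if the terminal vertex of $p$ equals the starting vertex of $q$, and $0$ otherwise. $M_n(F)$ is the algebra of $n\times n$ matrices over $F$. For an $F$-algebra $A$, $\mathrm{Id}(A)$ denotes the T-ideal of the free associative algebra $F\langle X\rangle$ consisting of all polynomial identities satisfied by $A$; $A$ is PI if $\mathrm{Id}(A)\neq\{0\}$. *)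

theory Defs
  imports Main "HOL-Library.Poly_Mapping" "HOL-Library.Function_Algebras"
begin

text \<open>The free associative algebra F<X> over the countable set of variables
  X = {x_0, x_1, ...}: finitely supported F-linear combinations of words
  (lists of variable indices).\<close>

type_synonym 'a ncpoly = "nat list \<Rightarrow>\<^sub>0 'a"

text \<open>Evaluation of a noncommutative polynomial in an algebra whose additive
  group is the type 'b, with multiplication mul, unit one and scalar
  multiplication sm, under the substitution phi of the variables.\<close>

definition nc_eval_word :: "('b \<Rightarrow> 'b \<Rightarrow> 'b) \<Rightarrow> 'b \<Rightarrow> (nat \<Rightarrow> 'b) \<Rightarrow> nat list \<Rightarrow> 'b" where
  "nc_eval_word mul one \<phi> w = foldr (\<lambda>x acc. mul (\<phi> x) acc) w one"

definition nc_eval :: "('b::comm_monoid_add \<Rightarrow> 'b \<Rightarrow> 'b) \<Rightarrow> 'b \<Rightarrow> ('a::zero \<Rightarrow> 'b \<Rightarrow> 'b)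
    \<Rightarrow> (nat \<Rightarrow> 'b) \<Rightarrow> 'a ncpoly \<Rightarrow> 'b" where
  "nc_eval mul one sm \<phi> f = (\<Sum>w\<in>Poly_Mapping.keys f. sm (Poly_Mapping.lookup f w) (nc_eval_word mul one \<phi> w))"

definition PI_Id :: "('b::comm_monoid_add \<Rightarrow> 'b \<Rightarrow> 'b) \<Rightarrow> 'b \<Rightarrow> ('a::zero \<Rightarrow> 'b \<Rightarrow> 'b)
    \<Rightarrow> 'b set \<Rightarrow> 'a ncpoly set" where
  "PI_Id mul one sm S = {f. \<forall>\<phi>. (\<forall>x. \<phi> x \<in> S) \<longrightarrow> nc_eval mul one sm \<phi> f = 0}"

text \<open>A finite quiver Q: vertex set {1..n}, arrow set E (finite) with source
  map s and target map t.  A path is a pair (v, es): start vertex v and a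
  list of composable arrows es; (i, []) is the length-zero path e_i.\<close>

definition is_path :: "nat \<Rightarrow> 'e set \<Rightarrow> ('e \<Rightarrow> nat) \<Rightarrow> ('e \<Rightarrow> nat) \<Rightarrow> nat \<times> 'e list \<Rightarrow> bool" where
  "is_path n E s t p \<longleftrightarrow>
     fst p \<in> {1..n} \<and> set (snd p) \<subseteq> E \<and>
     (snd p \<noteq> [] \<longrightarrow> s (hd (snd p)) = fst p) \<and>
     (\<forall>k. Suc k < length (snd p) \<longrightarrow> t (snd p ! k) = s (snd p ! Suc k))"

definition path_end :: "('e \<Rightarrow> nat) \<Rightarrow> nat \<times> 'e list \<Rightarrow> nat" where
  "path_end t p = (if snd p = [] then fst p else t (last (snd p)))"

definition has_path :: "nat \<Rightarrow> 'e set \<Rightarrow> ('e \<Rightarrow> nat) \<Rightarrow> ('e \<Rightarrow> nat) \<Rightarrow> nat \<Rightarrow> nat \<Rightarrow> bool" where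
  "has_path n E s t i j \<longleftrightarrow> (\<exists>p. is_path n E s t p \<and> fst p = i \<and> path_end t p = j)"

definition path_alg :: "nat \<Rightarrow> 'e set \<Rightarrow> ('e \<Rightarrow> nat) \<Rightarrow> ('e \<Rightarrow> nat)
    \<Rightarrow> ((nat \<times> 'e list) \<Rightarrow>\<^sub>0 'a::zero) set" where
  "path_alg n E s t = {x. \<forall>p\<in>Poly_Mapping.keys x. is_path n E s t p}"

definition pa_mult :: "('e \<Rightarrow> nat) \<Rightarrow> ((nat \<times> 'e list) \<Rightarrow>\<^sub>0 'a::semiring_0)
    \<Rightarrow> ((nat \<times> 'e list) \<Rightarrow>\<^sub>0 'a) \<Rightarrow> ((nat \<times> 'e list) \<Rightarrow>\<^sub>0 'a)" where
  "pa_mult t x y =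
     (\<Sum>p\<in>Poly_Mapping.keys x. \<Sum>q\<in>Poly_Mapping.keys y.
        if path_end t p = fst q
        then Poly_Mapping.single (fst p, snd p @ snd q) (Poly_Mapping.lookup x p * Poly_Mapping.lookup y q)
        else 0)"

definition pa_one :: "nat \<Rightarrow> ((nat \<times> 'e list) \<Rightarrow>\<^sub>0 'a::{zero,one,comm_monoid_add})" where
  "pa_one n = (\<Sum>i\<in>{1..n}. Poly_Mapping.single (i, []) 1)"

definition pa_smult :: "'a::semiring_0 \<Rightarrow> ((nat \<times> 'e list) \<Rightarrow>\<^sub>0 'a) \<Rightarrow> ((nat \<times> 'e list) \<Rightarrow>\<^sub>0 'a)" where
  "pa_smult c x = Poly_Mapping.map (\<lambda>v. c * v) x"

text \<open>An n x n matrix is a function nat => nat => F whose entries outside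
  {1..n} x {1..n} are zero.\<close>

definition mat_mult :: "nat \<Rightarrow> (nat \<Rightarrow> nat \<Rightarrow> 'a::semiring_0) \<Rightarrow> (nat \<Rightarrow> nat \<Rightarrow> 'a) \<Rightarrow> (nat \<Rightarrow> nat \<Rightarrow> 'a)" where
  "mat_mult n A B = (\<lambda>i j. \<Sum>k\<in>{1..n}. A i k * B k j)"

definition mat_one :: "nat \<Rightarrow> (nat \<Rightarrow> nat \<Rightarrow> 'a::{zero,one})" where
  "mat_one n = (\<lambda>i j. if i = j \<and> i \<in> {1..n} then 1 else 0)"

definition mat_smult :: "'a::times \<Rightarrow> (nat \<Rightarrow> nat \<Rightarrow> 'a) \<Rightarrow> (nat \<Rightarrow> nat \<Rightarrow> 'a)" where
  "mat_smult c A = (\<lambda>i j. c * A i j)"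

definition full_mat :: "nat \<Rightarrow> (nat \<Rightarrow> nat \<Rightarrow> 'a::zero) set" where
  "full_mat n = {A. \<forall>i j. A i j \<noteq> 0 \<longrightarrow> i \<in> {1..n} \<and> j \<in> {1..n}}"

definition A_Q :: "nat \<Rightarrow> 'e set \<Rightarrow> ('e \<Rightarrow> nat) \<Rightarrow> ('e \<Rightarrow> nat) \<Rightarrow> (nat \<Rightarrow> nat \<Rightarrow> 'a::zero) set" where
  "A_Q n E s t = {A \<in> full_mat n. \<forall>i j. \<not> has_path n E s t i j \<longrightarrow> A i j = 0}"

definition Id_FQ :: "nat \<Rightarrow> 'e set \<Rightarrow> ('e \<Rightarrow> nat) \<Rightarrow> ('e \<Rightarrow> nat) \<Rightarrow> 'a::comm_ring_1 ncpoly set" where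
  "Id_FQ n E s t =
     PI_Id (pa_mult t) (pa_one n) pa_smult (path_alg n E s t :: ((nat \<times> 'e list) \<Rightarrow>\<^sub>0 'a) set)"

definition Id_AQ :: "nat \<Rightarrow> 'e set \<Rightarrow> ('e \<Rightarrow> nat) \<Rightarrow> ('e \<Rightarrow> nat) \<Rightarrow> 'a::comm_ring_1 ncpoly set" where
  "Id_AQ n E s t =
     PI_Id (mat_mult n) (mat_one n) mat_smult (A_Q n E s t :: (nat \<Rightarrow> nat \<Rightarrow> 'a) set)"

end

theory Submission
  imports Defs "HOL-Computational_Algebra.Polynomial" "HOL-Library.Multiset"
begin

lemma lookup_pa_smult: "Poly_Mapping.lookup (pa_smult c x) k = c * Poly_Mapping.lookup x k"
  unfolding pa_smult_def by (simp add: Poly_Mapping.map.rep_eq when_def)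

lemma keys_pa_smult: "Poly_Mapping.keys (pa_smult c x) \<subseteq> Poly_Mapping.keys x"
  by (auto simp: in_keys_iff lookup_pa_smult)

definition wt :: "('e \<Rightarrow> 'a::comm_semiring_1) \<Rightarrow> nat \<times> 'e list \<Rightarrow> 'a" where
  "wt lam p = prod_list (map lam (snd p))"

definition psi :: "('e \<Rightarrow> nat) \<Rightarrow> ('e \<Rightarrow> 'a::comm_semiring_1) \<Rightarrow> ((nat \<times> 'e list) \<Rightarrow>\<^sub>0 'a) \<Rightarrow> nat \<Rightarrow> nat \<Rightarrow> 'a" where
  "psi t lam x = (\<lambda>i j. \<Sum>p\<in>Poly_Mapping.keys x. if fst p = i \<and> path_end t p = j then Poly_Mapping.lookup x p * wt lam p else 0)"

lemma psi_superset:
  assumes "finite K" "Poly_Mapping.keys x \<subseteq> K"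
  shows "psi t lam x i j = (\<Sum>p\<in>K. if fst p = i \<and> path_end t p = j then Poly_Mapping.lookup x p * wt lam p else 0)"
  unfolding psi_def
  by (rule sum.mono_neutral_left) (use assms in \<open>auto simp: in_keys_iff\<close>)

lemma psi_add: "psi t lam (x + y) = psi t lam x + psi t lam y"
proof (intro ext)
  fix i j
  let ?K = "Poly_Mapping.keys x \<union> Poly_Mapping.keys y"
  have "psi t lam (x + y) i j = (\<Sum>p\<in>?K. if fst p = i \<and> path_end t p = j then Poly_Mapping.lookup (x+y) p * wt lam p else 0)"
    by (rule psi_superset) (auto dest: set_mp[OF keys_add])
  also have "\<dots> = (\<Sum>p\<in>?K. if fst p = i \<and> path_end t p = j then Poly_Mapping.lookup x p * wt lam p else 0)
     + (\<Sum>p\<in>?K. if fst p = i \<and> path_end t p = j then Poly_Mapping.lookup y p * wt lam p else 0)"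
    by (auto simp add: sum.distrib[symmetric] lookup_add distrib_right intro!: sum.cong)
  also have "\<dots> = psi t lam x i j + psi t lam y i j"
    by (subst (1 2) psi_superset[of ?K]) auto
  finally show "psi t lam (x + y) i j = (psi t lam x + psi t lam y) i j" by simp
qed

lemma psi_zero: "psi t lam 0 = 0"
  by (auto simp: psi_def fun_eq_iff)

lemma psi_sum: "psi t lam (sum F S) = (\<Sum>s\<in>S. psi t lam (F s))"
  by (induction S rule: infinite_finite_induct) (auto simp: psi_add psi_zero)

lemma fun_sum_apply2: "(sum F S :: nat \<Rightarrow> nat \<Rightarrow> 'a::comm_monoid_add) i j = (\<Sum>s\<in>S. F s i j)"
  by (induction S rule: infinite_finite_induct) auto

lemma psi_single: "psi t lam (Poly_Mapping.single p c) i j = (if fst p = i \<and> path_end t p = j then c * wt lam p else 0)"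
  by (subst psi_superset[of "{p}"]) auto

lemma psi_smult: "psi t lam (pa_smult c x) = mat_smult c (psi t lam x)"
proof (intro ext)
  fix i j
  show "psi t lam (pa_smult c x) i j = mat_smult c (psi t lam x) i j"
    unfolding mat_smult_def
    apply (subst psi_superset[of "Poly_Mapping.keys x"])
    apply (auto simp: keys_pa_smult lookup_pa_smult psi_def sum_distrib_left mult.assoc intro!: sum.cong)
    done
qed

lemma wt_app: "wt lam (a, xs @ ys) = wt lam (b, xs) * wt lam (c, ys)"
  by (simp add: wt_def)

lemma path_end_in:
  assumes "is_path n E s t p" "\<forall>e\<in>E. s e \<in> {1..n} \<and> t e \<in> {1..n}"
  shows "path_end t p \<in> {1..n}"
  using assms unfolding is_path_def path_end_def
  by (cases "snd p = []") (auto dest!: last_in_set)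

lemma path_end_app:
  assumes "path_end t p = fst q"
  shows "path_end t (fst p, snd p @ snd q) = path_end t q"
  using assms unfolding path_end_def by auto

lemma is_path_app:
  assumes "is_path n E s t p" "is_path n E s t q" "path_end t p = fst q"
  shows "is_path n E s t (fst p, snd p @ snd q)"
proof -
  obtain i xs where p: "p = (i, xs)" by (cases p)
  obtain j ys where q: "q = (j, ys)" by (cases q)
  have A: "i \<in> {1..n}" "set xs \<subseteq> E" "xs \<noteq> [] \<longrightarrow> s (hd xs) = i"
     "\<forall>k. Suc k < length xs \<longrightarrow> t (xs ! k) = s (xs ! Suc k)"
    using assms(1) p unfolding is_path_def by auto
  have B: "j \<in> {1..n}" "set ys \<subseteq> E" "ys \<noteq> [] \<longrightarrow> s (hd ys) = j"
     "\<forall>k. Suc k < length ys \<longrightarrow> t (ys ! k) = s (ys ! Suc k)"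
    using assms(2) q unfolding is_path_def by auto
  have C: "(if xs = [] then i else t (last xs)) = j"
    using assms(3) p q unfolding path_end_def by auto
  have D: "t ((xs @ ys) ! k) = s ((xs @ ys) ! Suc k)" if "Suc k < length (xs @ ys)" for k
  proof -
    consider "Suc k < length xs" | "Suc k = length xs" | "Suc k > length xs" by linarith
    then show ?thesis
    proof cases
      case 1 then show ?thesis using A(4) by (simp add: nth_append)
    next
      case 2
      then have "xs \<noteq> []" "ys \<noteq> []" using that by auto
      moreover have "k = length xs - 1" using 2 by simp
      ultimately have "(xs @ ys) ! k = last xs" by (simp add: nth_append last_conv_nth)
      moreover have "(xs @ ys) ! Suc k = hd ys" using 2 `ys \<noteq> []` by (simp add: nth_append hd_conv_nth)
      ultimately show ?thesis using B(3) C `xs \<noteq> []` `ys \<noteq> []` by simp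
    next
      case 3
      then have "Suc (k - length xs) < length ys" using that by auto
      then show ?thesis using B(4) 3 by (auto simp: nth_append Suc_diff_le)
    qed
  qed
  have E: "xs @ ys \<noteq> [] \<longrightarrow> s (hd (xs @ ys)) = i"
    using A(3) B(3) C by (cases xs) auto
  show ?thesis unfolding p q is_path_def fst_conv snd_conv using A(1,2) B(2) D E by auto
qed

lemma keys_pa_mult:
  "Poly_Mapping.keys (pa_mult t x y) \<subseteq> {(fst p, snd p @ snd q) | p q. p \<in> Poly_Mapping.keys x \<and> q \<in> Poly_Mapping.keys y \<and> path_end t p = fst q}"
  unfolding pa_mult_def
  apply (rule order.trans[OF keys_sum])
  apply (rule UN_least)
  apply (rule order.trans[OF keys_sum])
  apply (auto split: if_splits)
  apply blast
  done

lemma pa_mult_closed: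
  assumes "x \<in> path_alg n E s t" "y \<in> path_alg n E s t"
  shows "pa_mult t x y \<in> path_alg n E s t"
proof -
  have "is_path n E s t r" if r: "r \<in> Poly_Mapping.keys (pa_mult t x y)" for r
  proof -
    obtain p q where "r = (fst p, snd p @ snd q)" "p \<in> Poly_Mapping.keys x" "q \<in> Poly_Mapping.keys y" "path_end t p = fst q"
      using set_mp[OF keys_pa_mult[of t x y] r] by auto
    then show ?thesis using assms unfolding path_alg_def by (auto intro!: is_path_app)
  qed
  then show ?thesis unfolding path_alg_def by auto
qed

lemma pa_one_closed: "(pa_one n :: ((nat \<times> 'e list) \<Rightarrow>\<^sub>0 'a::{zero,one,comm_monoid_add})) \<in> path_alg n E s t"
  unfolding path_alg_def pa_one_def
  using keys_sum[of "\<lambda>i. Poly_Mapping.single (i, []) (1::'a)" "{1..n}"]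
  by (force simp: is_path_def split: if_splits)

lemma path_end_app': "path_end t (a, xs) = b \<Longrightarrow> path_end t (a, xs @ ys) = path_end t (b, ys)"
  unfolding path_end_def by auto

lemma wt_app2: "wt lam (a, snd p @ snd q) = wt lam p * wt lam q"
  by (simp add: wt_def)

lemma psi_mult:
  assumes x: "x \<in> path_alg n E s t" and inr: "\<forall>e\<in>E. s e \<in> {1..n} \<and> t e \<in> {1..n}"
  shows "psi t lam (pa_mult t x y) = mat_mult n (psi t lam x) (psi t lam y)"
proof (intro ext)
  fix i j
  let ?G = "\<lambda>p q. if path_end t p = fst q then Poly_Mapping.single (fst p, snd p @ snd q) (Poly_Mapping.lookup x p * Poly_Mapping.lookup y q) else 0"
  let ?H = "\<lambda>p q. if fst p = i \<and> path_end t q = j \<and> path_end t p = fst q then Poly_Mapping.lookup x p * wt lam p * (Poly_Mapping.lookup y q * wt lam q) else 0"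
  have "psi t lam (pa_mult t x y) i j = (\<Sum>p\<in>Poly_Mapping.keys x. \<Sum>q\<in>Poly_Mapping.keys y. psi t lam (?G p q) i j)"
    unfolding pa_mult_def psi_sum fun_sum_apply2 ..
  also have "\<dots> = (\<Sum>p\<in>Poly_Mapping.keys x. \<Sum>q\<in>Poly_Mapping.keys y. ?H p q)"
    by (intro sum.cong refl) (auto simp: psi_single psi_zero path_end_app' wt_app2 mult_ac)
  also have "\<dots> = mat_mult n (psi t lam x) (psi t lam y) i j"
  proof -
    have "mat_mult n (psi t lam x) (psi t lam y) i j =
      (\<Sum>k\<in>{1..n}. \<Sum>p\<in>Poly_Mapping.keys x. \<Sum>q\<in>Poly_Mapping.keys y.
         (if fst p = i \<and> path_end t p = k then Poly_Mapping.lookup x p * wt lam p else 0) *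
         (if fst q = k \<and> path_end t q = j then Poly_Mapping.lookup y q * wt lam q else 0))"
      unfolding mat_mult_def psi_def sum_product ..
    also have "\<dots> = (\<Sum>p\<in>Poly_Mapping.keys x. \<Sum>q\<in>Poly_Mapping.keys y. \<Sum>k\<in>{1..n}.
         (if fst p = i \<and> path_end t p = k then Poly_Mapping.lookup x p * wt lam p else 0) *
         (if fst q = k \<and> path_end t q = j then Poly_Mapping.lookup y q * wt lam q else 0))"
      apply (rule trans[OF sum.swap])
      apply (rule sum.cong[OF refl])
      apply (rule sum.swap)
      done
    also have "\<dots> = (\<Sum>p\<in>Poly_Mapping.keys x. \<Sum>q\<in>Poly_Mapping.keys y. ?H p q)"
    proof (intro sum.cong refl)
      fix p q assume p: "p \<in> Poly_Mapping.keys x"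
      have e: "path_end t p \<in> {1..n}"
        using path_end_in[OF _ inr] p x unfolding path_alg_def by auto
      have "(\<Sum>k\<in>{1..n}.
         (if fst p = i \<and> path_end t p = k then Poly_Mapping.lookup x p * wt lam p else 0) *
         (if fst q = k \<and> path_end t q = j then Poly_Mapping.lookup y q * wt lam q else 0))
         = (\<Sum>k\<in>{1..n}. if k = path_end t p then ?H p q else 0)"
        by (intro sum.cong refl) auto
      also have "\<dots> = ?H p q" using e by simp
      finally show "(\<Sum>k\<in>{1..n}.
         (if fst p = i \<and> path_end t p = k then Poly_Mapping.lookup x p * wt lam p else 0) *
         (if fst q = k \<and> path_end t q = j then Poly_Mapping.lookup y q * wt lam q else 0)) = ?H p q" .
    qed
    finally show ?thesis by simp
  qed
  finally show "psi t lam (pa_mult t x y) i j = mat_mult n (psi t lam x) (psi t lam y) i j" .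
qed

lemma psi_one: "psi t lam (pa_one n) = mat_one n"
proof (intro ext)
  fix i j
  have "psi t lam (pa_one n) i j = (\<Sum>k\<in>{1..n}. if k = i \<and> k = j then 1 else 0)"
    unfolding pa_one_def psi_sum fun_sum_apply2
    by (intro sum.cong refl) (auto simp: psi_single path_end_def wt_def)
  also have "\<dots> = mat_one n i j"
    unfolding mat_one_def by (cases "i = j") (auto intro: sum.neutral)
  finally show "psi t lam (pa_one n) i j = mat_one n i j" .
qed

lemma word_closed:
  assumes "\<forall>k. \<phi> k \<in> path_alg n E s t"
  shows "nc_eval_word (pa_mult t) (pa_one n) \<phi> w \<in> path_alg n E s t"
  unfolding nc_eval_word_def
proof (induction w)
  case Nil
  then show ?case by (simp add: pa_one_closed)
next
  case (Cons a w)
  then show ?case by (simp add: pa_mult_closed assms)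
qed

lemma path_alg_sum:
  assumes "\<And>x. x \<in> S \<Longrightarrow> F x \<in> path_alg n E s t"
  shows "sum F S \<in> path_alg n E s t"
  using assms keys_sum[of F S] unfolding path_alg_def by blast

lemma path_alg_smult:
  assumes "x \<in> path_alg n E s t"
  shows "pa_smult c x \<in> path_alg n E s t"
  using assms keys_pa_smult[of c x] unfolding path_alg_def by blast

lemma nc_closed:
  assumes "\<forall>k. \<phi> k \<in> path_alg n E s t"
  shows "nc_eval (pa_mult t) (pa_one n) pa_smult \<phi> f \<in> path_alg n E s t"
  unfolding nc_eval_def
  by (intro path_alg_sum path_alg_smult word_closed assms)

lemma psi_word:
  assumes "\<forall>k. \<phi> k \<in> path_alg n E s t" and inr: "\<forall>e\<in>E. s e \<in> {1..n} \<and> t e \<in> {1..n}"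
  shows "psi t lam (nc_eval_word (pa_mult t) (pa_one n) \<phi> w) = nc_eval_word (mat_mult n) (mat_one n) (psi t lam \<circ> \<phi>) w"
proof (induction w)
  case Nil
  then show ?case by (simp add: nc_eval_word_def psi_one)
next
  case (Cons a w)
  have "psi t lam (nc_eval_word (pa_mult t) (pa_one n) \<phi> (a # w)) =
     psi t lam (pa_mult t (\<phi> a) (nc_eval_word (pa_mult t) (pa_one n) \<phi> w))"
    by (simp add: nc_eval_word_def)
  also have "\<dots> = mat_mult n (psi t lam (\<phi> a)) (psi t lam (nc_eval_word (pa_mult t) (pa_one n) \<phi> w))"
    by (rule psi_mult[OF _ inr]) (use assms in auto)
  finally show ?case using Cons by (simp add: nc_eval_word_def)
qed

lemma psi_nc:
  assumes "\<forall>k. \<phi> k \<in> path_alg n E s t" and inr: "\<forall>e\<in>E. s e \<in> {1..n} \<and> t e \<in> {1..n}"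
  shows "psi t lam (nc_eval (pa_mult t) (pa_one n) pa_smult \<phi> f) = nc_eval (mat_mult n) (mat_one n) mat_smult (psi t lam \<circ> \<phi>) f"
  unfolding nc_eval_def psi_sum psi_smult psi_word[OF assms] ..

lemma psi_AQ:
  assumes x: "x \<in> path_alg n E s t" and inr: "\<forall>e\<in>E. s e \<in> {1..n} \<and> t e \<in> {1..n}"
  shows "psi t lam x \<in> A_Q n E s t"
proof -
  have "i \<in> {1..n} \<and> j \<in> {1..n} \<and> has_path n E s t i j" if nz: "psi t lam x i j \<noteq> 0" for i j
  proof -
    have "\<exists>p. p \<in> Poly_Mapping.keys x \<and> fst p = i \<and> path_end t p = j"
    proof (rule ccontr)
      assume "\<not> ?thesis"
      then have "psi t lam x i j = 0" unfolding psi_def by (intro sum.neutral) auto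
      then show False using nz by simp
    qed
    then obtain p where p: "p \<in> Poly_Mapping.keys x" "fst p = i" "path_end t p = j" by blast
    have ip: "is_path n E s t p" using p x unfolding path_alg_def by auto
    then have "has_path n E s t i j" using p unfolding has_path_def by blast
    moreover have "i \<in> {1..n}" using ip p unfolding is_path_def by auto
    moreover have "j \<in> {1..n}" using path_end_in[OF ip inr] p by simp
    ultimately show ?thesis by blast
  qed
  then show ?thesis unfolding A_Q_def full_mat_def by auto
qed

lemma prod_list_one: "prod_list (map (\<lambda>_. 1) xs) = (1::'a::comm_semiring_1)"
  by (induction xs) auto

lemma wt_one: "wt (\<lambda>_. 1) p = 1"
  unfolding wt_def by (rule prod_list_one)

lemma psi_surj:
  assumes A: "A \<in> A_Q n E s t"
  shows "\<exists>x \<in> path_alg n E s t. psi t (\<lambda>_. 1) x = A"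
proof -
  define P where "P i j = (SOME p. is_path n E s t p \<and> fst p = i \<and> path_end t p = j)" for i j
  have P: "is_path n E s t (P i j) \<and> fst (P i j) = i \<and> path_end t (P i j) = j" if "has_path n E s t i j" for i j
    using that unfolding P_def has_path_def by (rule someI_ex)
  define G where "G ij = (if has_path n E s t (fst ij) (snd ij) then Poly_Mapping.single (P (fst ij) (snd ij)) (A (fst ij) (snd ij)) else 0)" for ij
  define x where "x = (\<Sum>ij\<in>{1..n}\<times>{1..n}. G ij)"
  have "x \<in> path_alg n E s t"
    unfolding x_def
  proof (rule path_alg_sum)
    fix ij show "G ij \<in> path_alg n E s t"
      unfolding G_def path_alg_def using P by auto
  qed
  moreover have "psi t (\<lambda>_. 1) x = A"
  proof (intro ext)
    fix i j
    have "psi t (\<lambda>_. 1) x i j = (\<Sum>ij\<in>{1..n}\<times>{1..n}. if ij = (i, j) \<and> has_path n E s t i j then A i j else 0)"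
      unfolding x_def psi_sum fun_sum_apply2
    proof (intro sum.cong refl)
      fix ij assume "ij \<in> {1..n}\<times>{1..n}"
      show "psi t (\<lambda>_. 1) (G ij) i j = (if ij = (i, j) \<and> has_path n E s t i j then A i j else 0)"
        unfolding G_def using P[of "fst ij" "snd ij"]
        by (cases ij) (auto simp: psi_single psi_zero wt_one)
    qed
    also have "\<dots> = (if (i, j) \<in> {1..n}\<times>{1..n} \<and> has_path n E s t i j then A i j else 0)"
    proof (cases "has_path n E s t i j")
      case True then show ?thesis by (simp add: sum.delta')
    next
      case False then show ?thesis by simp
    qed
    also have "\<dots> = A i j"
      using A unfolding A_Q_def full_mat_def by auto
    finally show "psi t (\<lambda>_. 1) x i j = A i j" .
  qed
  ultimately show ?thesis by blast
qed

lemma dir1: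
  assumes inr: "\<forall>e\<in>E. s e \<in> {1..n} \<and> t e \<in> {1..n}"
  shows "(Id_FQ n E s t :: 'a::field ncpoly set) \<subseteq> Id_AQ n E s t"
proof
  fix f :: "'a ncpoly" assume f: "f \<in> Id_FQ n E s t"
  show "f \<in> Id_AQ n E s t"
    unfolding Id_AQ_def PI_Id_def
  proof (safe)
    fix \<phi> :: "nat \<Rightarrow> nat \<Rightarrow> nat \<Rightarrow> 'a" assume "\<forall>x. \<phi> x \<in> A_Q n E s t"
    then have "\<forall>k. \<exists>x \<in> path_alg n E s t. psi t (\<lambda>_. 1) x = \<phi> k" using psi_surj by blast
    then obtain \<chi> where chi: "\<forall>k. \<chi> k \<in> path_alg n E s t \<and> psi t (\<lambda>_. 1) (\<chi> k) = \<phi> k" by metis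
    then have "\<phi> = psi t (\<lambda>_. 1) \<circ> \<chi>" by auto
    then have "nc_eval (mat_mult n) (mat_one n) mat_smult \<phi> f = psi t (\<lambda>_. 1) (nc_eval (pa_mult t) (pa_one n) pa_smult \<chi> f)"
      using psi_nc[of \<chi> n E s t] chi inr by auto
    also have "nc_eval (pa_mult t) (pa_one n) pa_smult \<chi> f = 0"
      using f chi unfolding Id_FQ_def PI_Id_def by auto
    finally show "nc_eval (mat_mult n) (mat_one n) mat_smult \<phi> f = 0" by (simp add: psi_zero zero_fun_def)
  qed
qed


lemma uni:
  fixes d :: "'p \<Rightarrow> 'a::field_char_0"
  assumes "finite P" "\<forall>z. (\<Sum>p\<in>P. d p * z ^ e p) = 0"
  shows "(\<Sum>p\<in>{p\<in>P. e p = k}. d p) = 0"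
proof -
  let ?Q = "\<Sum>p\<in>P. monom (d p) (e p)"
  have "\<forall>z. poly ?Q z = 0" using assms by (simp add: poly_sum poly_monom)
  then have "?Q = 0" using poly_all_0_iff_0 by blast
  then have "coeff ?Q k = 0" by simp
  moreover have "coeff ?Q k = (\<Sum>p\<in>P. if e p = k then d p else 0)"
    by (simp add: coeff_sum coeff_monom)
  moreover have "\<dots> = (\<Sum>p\<in>{p\<in>P. e p = k}. d p)"
    using assms(1) by (simp add: sum.inter_filter)
  ultimately show ?thesis by simp
qed

lemma mv:
  fixes c :: "'p \<Rightarrow> 'a::field_char_0" and m :: "'p \<Rightarrow> 'e \<Rightarrow> nat"
  assumes "finite E" "finite P"
    and "\<forall>p\<in>P. \<forall>q\<in>P. (\<forall>a\<in>E. m p a = m q a) \<longrightarrow> p = q"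
    and "\<forall>lam. (\<Sum>p\<in>P. c p * (\<Prod>a\<in>E. lam a ^ m p a)) = 0"
    and "p0 \<in> P"
  shows "c p0 = 0"
  using assms(1) assms(2-)
proof (induction E arbitrary: P p0 rule: finite_induct)
  case empty
  then have "P = {p0}" by auto
  then show ?case using empty.prems(3) by simp
next
  case (insert a E)
  define P' where "P' = {p\<in>P. m p a = m p0 a}"
  show ?case
  proof (rule insert.IH)
    show "finite P'" using insert.prems(1) unfolding P'_def by simp
    show "p0 \<in> P'" using insert.prems(4) unfolding P'_def by simp
    show "\<forall>p\<in>P'. \<forall>q\<in>P'. (\<forall>b\<in>E. m p b = m q b) \<longrightarrow> p = q"
      using insert.prems(2) unfolding P'_def by auto
    show "\<forall>lam. (\<Sum>p\<in>P'. c p * (\<Prod>b\<in>E. lam b ^ m p b)) = 0"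
    proof
      fix lam :: "'e \<Rightarrow> 'a"
      have "\<forall>z. (\<Sum>p\<in>P. (c p * (\<Prod>b\<in>E. lam b ^ m p b)) * z ^ m p a) = 0"
      proof
        fix z
        have eq: "(\<Prod>b\<in>insert a E. (lam(a:=z)) b ^ m p b) = z ^ m p a * (\<Prod>b\<in>E. lam b ^ m p b)" for p
        proof -
          have "(\<Prod>b\<in>E. (lam(a:=z)) b ^ m p b) = (\<Prod>b\<in>E. lam b ^ m p b)"
            using insert.hyps(2) by (intro prod.cong) auto
          then show ?thesis using insert.hyps by simp
        qed
        have "(\<Sum>p\<in>P. c p * (\<Prod>b\<in>insert a E. (lam(a:=z)) b ^ m p b)) = 0"
          using insert.prems(3) by blast
        then have "(\<Sum>p\<in>P. c p * (z ^ m p a * (\<Prod>b\<in>E. lam b ^ m p b))) = 0"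
          unfolding eq .
        then show "(\<Sum>p\<in>P. (c p * (\<Prod>b\<in>E. lam b ^ m p b)) * z ^ m p a) = 0"
          by (simp add: eq mult_ac)
      qed
      from uni[OF insert.prems(1) this, of "m p0 a"]
      show "(\<Sum>p\<in>P'. c p * (\<Prod>b\<in>E. lam b ^ m p b)) = 0" unfolding P'_def .
    qed
  qed
qed

lemma prod_list_count:
  fixes lam :: "'e \<Rightarrow> 'a::comm_semiring_1"
  assumes "finite E" "set xs \<subseteq> E"
  shows "prod_list (map lam xs) = (\<Prod>a\<in>E. lam a ^ count_list xs a)"
  using assms(2)
proof (induction xs)
  case Nil
  then show ?case by simp
next
  case (Cons x xs)
  have "(\<Prod>a\<in>E. lam a ^ count_list (x # xs) a) = (\<Prod>a\<in>E. (if a = x then lam a else 1) * lam a ^ count_list xs a)"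
    by (intro prod.cong) auto
  also have "\<dots> = (\<Prod>a\<in>E. (if a = x then lam a else 1)) * (\<Prod>a\<in>E. lam a ^ count_list xs a)"
    by (rule prod.distrib)
  also have "(\<Prod>a\<in>E. (if a = x then lam a else 1)) = lam x"
    using Cons.prems assms(1) by (simp add: prod.delta')
  finally show ?case using Cons by simp
qed


lemma segment:
  assumes ip: "is_path n E s t (i, xs)" and inr: "\<forall>e\<in>E. s e \<in> {1..n} \<and> t e \<in> {1..n}"
    and km: "k < m" "m < length xs"
  defines "C \<equiv> take (m - k) (drop k xs)"
  shows "C \<noteq> [] \<and> hd C = xs ! k \<and> is_path n E s t (s (xs ! k), C) \<and> path_end t (s (xs ! k), C) = s (xs ! m)"
proof -
  have len: "length C = m - k" unfolding C_def using km by simp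
  have nth: "C ! j = xs ! (k + j)" if "j < m - k" for j
    unfolding C_def using that km by simp
  have set: "set xs \<subseteq> E" and cons: "\<forall>j. Suc j < length xs \<longrightarrow> t (xs ! j) = s (xs ! Suc j)"
    using ip unfolding is_path_def by auto
  have "set C \<subseteq> set xs" unfolding C_def by (meson in_set_dropD in_set_takeD subsetI)
  then have setC: "set C \<subseteq> E" using set by blast
  have ne: "C \<noteq> []" using len km by auto
  have hd: "hd C = xs ! k" using nth[of 0] ne km by (simp add: hd_conv_nth)
  have xk: "xs ! k \<in> E" using set km by auto
  have consC: "\<forall>j. Suc j < length C \<longrightarrow> t (C ! j) = s (C ! Suc j)"
  proof (intro allI impI)
    fix j assume j: "Suc j < length C"
    then have "t (xs ! (k + j)) = s (xs ! Suc (k + j))" using cons len km by auto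
    then show "t (C ! j) = s (C ! Suc j)" using nth j len by auto
  qed
  have lst: "last C = xs ! (m - 1)"
    using ne len nth[of "m - k - 1"] km by (simp add: last_conv_nth)
  have "t (xs ! (m - 1)) = s (xs ! m)" using cons km by (metis Suc_diff_1 gr_implies_not0 not_gr_zero)
  then have pe: "path_end t (s (xs ! k), C) = s (xs ! m)" unfolding path_end_def using ne lst by simp
  have "is_path n E s t (s (xs ! k), C)"
    unfolding is_path_def using xk inr setC hd consC by auto
  then show ?thesis using ne hd pe by blast
qed

lemma half:
  assumes ip: "is_path n E s t (i, xs)" and inr: "\<forall>e\<in>E. s e \<in> {1..n} \<and> t e \<in> {1..n}"
    and k: "k < length xs" and b: "b \<in> set (drop k xs)" "b \<noteq> xs ! k"
  shows "\<exists>C. C \<noteq> [] \<and> hd C = xs ! k \<and> is_path n E s t (s (xs ! k), C) \<and> path_end t (s (xs ! k), C) = s b"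
proof -
  obtain j where j: "j < length (drop k xs)" "drop k xs ! j = b" using b(1) by (metis in_set_conv_nth)
  then have xj: "xs ! (k + j) = b" "k + j < length xs" using k by auto
  have "j \<noteq> 0" proof assume "j = 0" then show False using xj b(2) by simp qed
  then have "k < k + j" by simp
  from segment[OF ip inr this xj(2)] show ?thesis using xj by metis
qed

lemma cycles_from_pair:
  assumes inr: "\<forall>e\<in>E. s e \<in> {1..n} \<and> t e \<in> {1..n}"
    and ip: "is_path n E s t (i, xs)" and iq: "is_path n E s t (i, ys)"
    and ms: "mset xs = mset ys" and ne: "xs \<noteq> ys"
  shows "\<exists>u C1 C2. u \<in> {1..n} \<and> C1 \<noteq> [] \<and> C2 \<noteq> [] \<and> hd C1 \<noteq> hd C2 \<and>
     is_path n E s t (u, C1) \<and> path_end t (u, C1) = u \<and> is_path n E s t (u, C2) \<and> path_end t (u, C2) = u"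
proof -
  have len: "length xs = length ys" using ms by (rule mset_eq_length)
  have ex: "\<exists>k. k < length xs \<and> xs ! k \<noteq> ys ! k"
    using ne len nth_equalityI by blast
  define k where "k = (LEAST k. k < length xs \<and> xs ! k \<noteq> ys ! k)"
  have k: "k < length xs" "xs ! k \<noteq> ys ! k" using LeastI_ex[OF ex] unfolding k_def by auto
  have before: "xs ! j = ys ! j" if "j < k" for j
    using not_less_Least[of j "\<lambda>k. k < length xs \<and> xs ! k \<noteq> ys ! k"] that k unfolding k_def by auto
  have tk: "take k xs = take k ys" using before len k by (intro nth_equalityI) auto
  have setx: "set xs \<subseteq> E" and consx: "\<forall>j. Suc j < length xs \<longrightarrow> t (xs ! j) = s (xs ! Suc j)"
    and hdx: "xs \<noteq> [] \<longrightarrow> s (hd xs) = i" using ip unfolding is_path_def by auto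
  have sety: "set ys \<subseteq> E" and consy: "\<forall>j. Suc j < length ys \<longrightarrow> t (ys ! j) = s (ys ! Suc j)"
    and hdy: "ys \<noteq> [] \<longrightarrow> s (hd ys) = i" using iq unfolding is_path_def by auto
  have su: "s (xs ! k) = s (ys ! k)"
  proof (cases k)
    case 0
    then show ?thesis using hdx hdy k len by (auto simp: hd_conv_nth)
  next
    case (Suc k')
    then have "s (xs ! k) = t (xs ! k')" "s (ys ! k) = t (ys ! k')" using consx consy k len by auto
    then show ?thesis using before[of k'] Suc by simp
  qed
  have md: "mset (drop k xs) = mset (drop k ys)"
  proof -
    have "mset (take k xs) + mset (drop k xs) = mset (take k ys) + mset (drop k ys)"
      using ms by (metis append_take_drop_id mset_append)
    then show ?thesis using tk by simp
  qed
  have "ys ! k \<in> set (drop k ys)" using k len by (metis Cons_nth_drop_Suc list.set_intros(1))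
  then have b1: "ys ! k \<in> set (drop k xs)" using md by (metis set_mset_mset)
  have "xs ! k \<in> set (drop k xs)" using k by (metis Cons_nth_drop_Suc list.set_intros(1))
  then have b2: "xs ! k \<in> set (drop k ys)" using md by (metis set_mset_mset)
  obtain C1 where C1: "C1 \<noteq> []" "hd C1 = xs ! k" "is_path n E s t (s (xs ! k), C1)" "path_end t (s (xs ! k), C1) = s (ys ! k)"
    using half[OF ip inr k(1) b1] k(2) by metis
  obtain C2 where C2: "C2 \<noteq> []" "hd C2 = ys ! k" "is_path n E s t (s (ys ! k), C2)" "path_end t (s (ys ! k), C2) = s (xs ! k)"
    using half[OF iq inr _ b2] k len by metis
  have "xs ! k \<in> E" using setx k by auto
  then have "s (xs ! k) \<in> {1..n}" using inr by blast
  then show ?thesis using C1 C2 su k(2) by metis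
qed


definition code :: "'e list \<Rightarrow> 'e list \<Rightarrow> nat \<Rightarrow> 'e list" where
  "code C1 C2 k = concat (replicate k C2) @ C1"

definition gw :: "'e list \<Rightarrow> 'e list \<Rightarrow> nat list \<Rightarrow> 'e list" where
  "gw C1 C2 w = concat (map (code C1 C2) w)"

lemma code_inj:
  assumes "C1 \<noteq> []" "C2 \<noteq> []" "hd C1 \<noteq> hd C2"
  shows "code C1 C2 k @ r = code C1 C2 k' @ r' \<Longrightarrow> k = k' \<and> r = r'"
proof (induction k arbitrary: k')
  case 0
  then show ?case
  proof (cases k')
    case 0 then show ?thesis using "0.prems" by (simp add: code_def)
  next
    case (Suc k'')
    then have "hd (C1 @ r) = hd (C2 @ code C1 C2 k'' @ r')" using "0.prems" by (simp add: code_def)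
    then show ?thesis using assms by simp
  qed
next
  case (Suc k)
  then show ?case
  proof (cases k')
    case 0
    then have "hd (C2 @ code C1 C2 k @ r) = hd (C1 @ r')" using Suc.prems by (simp add: code_def)
    then show ?thesis using assms by simp
  next
    case (Suc k'')
    then have "code C1 C2 k @ r = code C1 C2 k'' @ r'" using Suc.prems by (simp add: code_def)
    then show ?thesis using Suc.IH Suc by simp
  qed
qed

lemma code_ne: "C1 \<noteq> [] \<Longrightarrow> code C1 C2 k \<noteq> []"
  by (simp add: code_def)

lemma gw_inj:
  assumes "C1 \<noteq> []" "C2 \<noteq> []" "hd C1 \<noteq> hd C2"
  shows "gw C1 C2 w = gw C1 C2 w' \<Longrightarrow> w = w'"
proof (induction w arbitrary: w')
  case Nil
  then show ?case using code_ne[OF assms(1)] by (cases w') (auto simp: gw_def)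
next
  case (Cons a w)
  then show ?case
  proof (cases w')
    case Nil
    then show ?thesis using Cons.prems code_ne[OF assms(1)] by (auto simp: gw_def)
  next
    case (Cons b w'')
    then have "code C1 C2 a @ gw C1 C2 w = code C1 C2 b @ gw C1 C2 w''"
      using Cons.prems by (simp add: gw_def)
    then show ?thesis using code_inj[OF assms] Cons.IH Cons by blast
  qed
qed

lemma gw_Nil_iff: "C1 \<noteq> [] \<Longrightarrow> gw C1 C2 w = [] \<longleftrightarrow> w = []"
  by (cases w) (auto simp: gw_def code_def)

lemma closed_app:
  assumes "is_path n E s t (u, A)" "path_end t (u, A) = u" "is_path n E s t (u, B)" "path_end t (u, B) = u"
  shows "is_path n E s t (u, A @ B) \<and> path_end t (u, A @ B) = u"
  using is_path_app[OF assms(1) assms(3)] assms path_end_app'[OF assms(2), of B] by simp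

lemma closed_code:
  assumes "is_path n E s t (u, C1)" "path_end t (u, C1) = u" "is_path n E s t (u, C2)" "path_end t (u, C2) = u"
  shows "is_path n E s t (u, code C1 C2 k) \<and> path_end t (u, code C1 C2 k) = u"
proof (induction k)
  case 0
  then show ?case using assms by (simp add: code_def)
next
  case (Suc k)
  have "code C1 C2 (Suc k) = C2 @ code C1 C2 k" by (simp add: code_def)
  then show ?case using closed_app[OF assms(3,4)] Suc by simp
qed

lemma pa_mult_single:
  "pa_mult t (Poly_Mapping.single p (1::'a::field)) (Poly_Mapping.single q 1) =
    (if path_end t p = fst q then Poly_Mapping.single (fst p, snd p @ snd q) 1 else 0)"
  unfolding pa_mult_def by simp

lemma lookup_pa_one: "Poly_Mapping.lookup (pa_one n :: ((nat \<times> 'e list) \<Rightarrow>\<^sub>0 'a::field)) q =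
   (if snd q = [] \<and> fst q \<in> {1..n} then 1 else 0)"
proof -
  have "Poly_Mapping.lookup (pa_one n :: ((nat \<times> 'e list) \<Rightarrow>\<^sub>0 'a)) q = (\<Sum>i\<in>{1..n}. if (i, []) = q then 1 else 0)"
    unfolding pa_one_def lookup_sum by (simp add: lookup_single when_def)
  also have "\<dots> = (\<Sum>i\<in>{1..n}. if i = fst q then (if snd q = [] then 1 else 0) else 0)"
    by (intro sum.cong refl) (cases q, auto)
  also have "\<dots> = (if snd q = [] \<and> fst q \<in> {1..n} then 1 else 0)"
    by (simp add: sum.delta')
  finally show ?thesis .
qed

lemma pa_mult_single_left:
  "pa_mult t (Poly_Mapping.single p (1::'a::field)) y = (\<Sum>q\<in>Poly_Mapping.keys y. if path_end t p = fst q then Poly_Mapping.single (fst p, snd p @ snd q) (Poly_Mapping.lookup y q) else 0)"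
  unfolding pa_mult_def by (simp cong: if_cong)

lemma pa_mult_one:
  fixes p :: "nat \<times> 'e list"
  assumes "path_end t p \<in> {1..n}"
  shows "pa_mult t (Poly_Mapping.single p (1::'a::field)) (pa_one n) = Poly_Mapping.single p 1"
proof -
  have K: "Poly_Mapping.keys (pa_one n :: ((nat \<times> 'e list) \<Rightarrow>\<^sub>0 'a)) = (\<lambda>i. (i, [])) ` {1..n}"
    by (auto simp: in_keys_iff lookup_pa_one image_iff split: if_splits)
  have "pa_mult t (Poly_Mapping.single p (1::'a)) (pa_one n) =
     (\<Sum>q\<in>(\<lambda>i. (i, [])) ` {1..n}. if path_end t p = fst q then Poly_Mapping.single (fst p, snd p @ snd q) (Poly_Mapping.lookup (pa_one n :: ((nat \<times> 'e list) \<Rightarrow>\<^sub>0 'a)) q) else 0)"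
    unfolding pa_mult_single_left K ..
  also have "\<dots> = (\<Sum>q\<in>(\<lambda>i. (i, [] :: 'e list)) ` {1..n}. if q = (path_end t p, []) then Poly_Mapping.single p 1 else 0)"
    by (intro sum.cong refl) (auto simp: lookup_pa_one)
  also have "\<dots> = Poly_Mapping.single p 1"
    using assms by (subst sum.delta) (auto simp: image_iff)
  finally show ?thesis .
qed

lemma free:
  assumes u: "u \<in> {1..n}" and ne: "C1 \<noteq> []" "C2 \<noteq> []" "hd C1 \<noteq> hd C2"
    and c1: "is_path n E s t (u, C1)" "path_end t (u, C1) = u"
    and c2: "is_path n E s t (u, C2)" "path_end t (u, C2) = u"
    and f: "(f :: 'a::field ncpoly) \<in> Id_FQ n E s t"
  shows "f = 0"
proof -
  define \<phi> where "\<phi> k = Poly_Mapping.single (u, code C1 C2 k) (1::'a)" for k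
  have cl: "is_path n E s t (u, code C1 C2 k) \<and> path_end t (u, code C1 C2 k) = u" for k
    using closed_code[OF c1 c2] .
  have phi: "\<forall>k. \<phi> k \<in> path_alg n E s t" unfolding \<phi>_def path_alg_def using cl by auto
  have ev: "nc_eval_word (pa_mult t) (pa_one n) \<phi> w = (if w = [] then pa_one n else Poly_Mapping.single (u, gw C1 C2 w) 1)" for w
  proof (induction w)
    case Nil then show ?case by (simp add: nc_eval_word_def)
  next
    case (Cons a w)
    have "nc_eval_word (pa_mult t) (pa_one n) \<phi> (a # w) = pa_mult t (\<phi> a) (nc_eval_word (pa_mult t) (pa_one n) \<phi> w)"
      by (simp add: nc_eval_word_def)
    also have "\<dots> = Poly_Mapping.single (u, gw C1 C2 (a # w)) 1"
    proof (cases "w = []")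
      case True
      then show ?thesis using Cons cl[of a] u unfolding \<phi>_def by (simp add: pa_mult_one gw_def)
    next
      case False
      then show ?thesis using Cons cl[of a] unfolding \<phi>_def by (simp add: pa_mult_single gw_def)
    qed
    finally show ?case by simp
  qed
  have lk: "Poly_Mapping.lookup (nc_eval_word (pa_mult t) (pa_one n) \<phi> w) (u, gw C1 C2 w0) = (if w = w0 then 1 else 0)" for w w0
  proof (cases "w = []")
    case True
    then show ?thesis using u gw_Nil_iff[OF ne(1), where w=w0] by (auto simp: ev lookup_pa_one)
  next
    case False
    then show ?thesis using gw_inj[OF ne] by (auto simp: ev lookup_single when_def)
  qed
  have "nc_eval (pa_mult t) (pa_one n) pa_smult \<phi> f = 0"
    using f phi unfolding Id_FQ_def PI_Id_def by auto
  have "Poly_Mapping.lookup f w0 = 0" for w0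
  proof -
    have "Poly_Mapping.lookup (nc_eval (pa_mult t) (pa_one n) pa_smult \<phi> f) (u, gw C1 C2 w0) =
      (\<Sum>w\<in>Poly_Mapping.keys f. Poly_Mapping.lookup f w * (if w = w0 then 1 else 0))"
      unfolding nc_eval_def lookup_sum lookup_pa_smult lk ..
    also have "\<dots> = Poly_Mapping.lookup f w0"
      by (auto simp: in_keys_iff if_distrib cong: if_cong)
    finally show ?thesis using \<open>nc_eval (pa_mult t) (pa_one n) pa_smult \<phi> f = 0\<close> by simp
  qed
  then show ?thesis by (intro poly_mapping_eqI) simp
qed


lemma zero_in_Id_FQ: "0 \<in> Id_FQ n E s t"
  unfolding Id_FQ_def PI_Id_def nc_eval_def by simp

lemma no_bad:
  assumes inr: "\<forall>e\<in>E. s e \<in> {1..n} \<and> t e \<in> {1..n}"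
    and PI: "(Id_FQ n E s t :: 'a::field ncpoly set) \<noteq> {0}"
    and ip: "is_path n E s t p" and iq: "is_path n E s t q"
    and eq: "fst p = fst q" "mset (snd p) = mset (snd q)"
  shows "p = q"
proof (rule ccontr)
  assume "p \<noteq> q"
  then have ne: "snd p \<noteq> snd q" using eq by (metis prod_eqI)
  obtain i xs where p: "p = (i, xs)" by (cases p)
  obtain ys where q: "q = (i, ys)" using eq p by (cases q) auto
  obtain u C1 C2 where c: "u \<in> {1..n}" "C1 \<noteq> []" "C2 \<noteq> []" "hd C1 \<noteq> hd C2"
     "is_path n E s t (u, C1)" "path_end t (u, C1) = u" "is_path n E s t (u, C2)" "path_end t (u, C2) = u"
    using cycles_from_pair[OF inr, of i xs ys] ip iq eq ne p q by auto
  have "\<forall>f \<in> (Id_FQ n E s t :: 'a ncpoly set). f = 0"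
    using free[OF c] by blast
  then have "(Id_FQ n E s t :: 'a ncpoly set) = {0}" using zero_in_Id_FQ by blast
  then show False using PI by simp
qed

lemma dir2:
  fixes E :: "'e set"
  assumes finE: "finite E" and inr: "\<forall>e\<in>E. s e \<in> {1..n} \<and> t e \<in> {1..n}"
    and PI: "(Id_FQ n E s t :: 'a::field_char_0 ncpoly set) \<noteq> {0}"
  shows "(Id_AQ n E s t :: 'a ncpoly set) \<subseteq> Id_FQ n E s t"
proof
  fix f :: "'a ncpoly" assume f: "f \<in> Id_AQ n E s t"
  show "f \<in> Id_FQ n E s t"
    unfolding Id_FQ_def PI_Id_def
  proof (safe)
    fix \<chi> :: "nat \<Rightarrow> (nat \<times> 'e list) \<Rightarrow>\<^sub>0 'a" assume chi: "\<forall>x. \<chi> x \<in> path_alg n E s t"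
    define y where "y = nc_eval (pa_mult t) (pa_one n) pa_smult \<chi> f"
    have yP: "y \<in> path_alg n E s t" unfolding y_def using nc_closed chi by blast
    have Z: "psi t lam y = 0" for lam
    proof -
      have "psi t lam y = nc_eval (mat_mult n) (mat_one n) mat_smult (psi t lam \<circ> \<chi>) f"
        unfolding y_def using psi_nc[OF chi inr] .
      also have "\<dots> = 0"
      proof -
        have "\<forall>x. (psi t lam \<circ> \<chi>) x \<in> A_Q n E s t" 
        proof
          fix x show "(psi t lam \<circ> \<chi>) x \<in> A_Q n E s t"
            unfolding comp_apply by (rule psi_AQ[OF _ inr]) (use chi in blast)
        qed
        then show ?thesis using f unfolding Id_AQ_def PI_Id_def by blast
      qed
      finally show ?thesis .
    qed
    have "Poly_Mapping.lookup y p0 = 0" for p0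
    proof (rule ccontr)
      assume nz: "Poly_Mapping.lookup y p0 \<noteq> 0"
      then have p0: "p0 \<in> Poly_Mapping.keys y" by (simp add: in_keys_iff)
      define P where "P = {p \<in> Poly_Mapping.keys y. fst p = fst p0 \<and> path_end t p = path_end t p0}"
      define m where "m p a = count_list (snd p) a" for p :: "nat \<times> 'e list" and a
      have paths: "is_path n E s t p" if "p \<in> Poly_Mapping.keys y" for p
        using yP that unfolding path_alg_def by auto
      have sets: "set (snd p) \<subseteq> E" if "p \<in> Poly_Mapping.keys y" for p
        using paths[OF that] unfolding is_path_def by auto
      have "Poly_Mapping.lookup y p0 = 0"
      proof (rule mv[OF finE, where P=P and c="Poly_Mapping.lookup y" and m=m])
        show "finite P" unfolding P_def by simp
        show "p0 \<in> P" unfolding P_def using p0 by simp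
        show "\<forall>p\<in>P. \<forall>q\<in>P. (\<forall>a\<in>E. m p a = m q a) \<longrightarrow> p = q"
        proof (intro ballI impI)
          fix p q assume pq: "p \<in> P" "q \<in> P" and cnt: "\<forall>a\<in>E. m p a = m q a"
          have "mset (snd p) = mset (snd q)"
          proof (rule multiset_eqI)
            fix a
            show "count (mset (snd p)) a = count (mset (snd q)) a"
            proof (cases "a \<in> E")
              case True then show ?thesis using cnt by (simp add: count_mset m_def)
            next
              case False
              have "p \<in> Poly_Mapping.keys y" "q \<in> Poly_Mapping.keys y" using pq unfolding P_def by auto
              then have "a \<notin> set (snd p)" "a \<notin> set (snd q)" using sets False by blast+
              then show ?thesis by (simp add: count_mset)
            qed
          qed
          then show "p = q" using no_bad[OF inr PI[unfolded]] paths pq unfolding P_def by auto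
        qed
        show "\<forall>lam. (\<Sum>p\<in>P. Poly_Mapping.lookup y p * (\<Prod>a\<in>E. lam a ^ m p a)) = 0"
        proof
          fix lam :: "'e \<Rightarrow> 'a"
          have "0 = psi t lam y (fst p0) (path_end t p0)" using Z[of lam] by simp
          also have "\<dots> = (\<Sum>p\<in>Poly_Mapping.keys y. if fst p = fst p0 \<and> path_end t p = path_end t p0 then Poly_Mapping.lookup y p * wt lam p else 0)"
            unfolding psi_def ..
          also have "\<dots> = (\<Sum>p\<in>P. Poly_Mapping.lookup y p * wt lam p)"
            unfolding P_def by (simp add: sum.inter_filter)
          also have "\<dots> = (\<Sum>p\<in>P. Poly_Mapping.lookup y p * (\<Prod>a\<in>E. lam a ^ m p a))"
            by (intro sum.cong refl) (simp add: wt_def m_def prod_list_count[OF finE] sets P_def)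
          finally show "(\<Sum>p\<in>P. Poly_Mapping.lookup y p * (\<Prod>a\<in>E. lam a ^ m p a)) = 0" by simp
        qed
      qed
      then show False using nz by simp
    qed
    then show "nc_eval (pa_mult t) (pa_one n) pa_smult \<chi> f = 0"
      unfolding y_def[symmetric] by (intro poly_mapping_eqI) simp
  qed
qed

theorem corollary2:
  fixes n :: nat and E :: "'e set" and s t :: "'e \<Rightarrow> nat"
  assumes "finite E"
    and "\<forall>e\<in>E. s e \<in> {1..n} \<and> t e \<in> {1..n}"
    and "(Id_FQ n E s t :: 'a::field_char_0 ncpoly set) \<noteq> {0}"
  shows "(Id_FQ n E s t :: 'a::field_char_0 ncpoly set) = Id_AQ n E s t"
  using dir1[OF assms(2)] dir2[OF assms] by blast

end
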